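(* For every graph $G$ on $[n]$ and every $k=2,3,\dots,n-2$, the polynomial $$\theta_k=\sum_{ij\in G}s_{ij}\sum_{\ell=0}^{k}x_i^{k-\ell}x_j^{\ell}$$ vanishes on the scattering correspondence $\mathcal V_G$.
   Context: $G$ is a simple graph on $[n]$, and $G_i$ denotes the set of neighbours of vertex $i$. The variables are $s_{ij}$ ($ij\in G$) and $x_1,\dots,x_n$. $\mathcal K_G$ is defined by $\sum_{j\in G_i}s_{ij}=0$ for $i\in[n]$. $\mathcal H$ is the union of the hyperplanes $x_i=x_j$ for $i<j$. The scattering correspondence is $$\mathcal V_G=\{(s,x)\in\mathbb P^{|G|-1}\times(\mathbb P^{n-1}\setminus\mathcal H): s\in\mathcal K_G,\ \textstyle\sum_{j\in G_i}s_{ij}/(x_i-x_j)=0\ \text{for all } i\in[n]\}.$$ *)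

theory Defs
  imports Complex_Main
begin

definition simple_graph :: "nat \<Rightarrow> (nat \<Rightarrow> nat \<Rightarrow> bool) \<Rightarrow> bool" where
  "simple_graph n E \<longleftrightarrow>
     (\<forall>i j. E i j \<longrightarrow> i \<in> {1..n} \<and> j \<in> {1..n}) \<and>
     (\<forall>i j. E i j \<longrightarrow> E j i) \<and> (\<forall>i. \<not> E i i)"

definition nbrs :: "nat \<Rightarrow> (nat \<Rightarrow> nat \<Rightarrow> bool) \<Rightarrow> nat \<Rightarrow> nat set" where
  "nbrs n E i = {j \<in> {1..n}. E i j}"

definition edges :: "nat \<Rightarrow> (nat \<Rightarrow> nat \<Rightarrow> bool) \<Rightarrow> (nat \<times> nat) set" where
  "edges n E = {(i,j). i \<in> {1..n} \<and> j \<in> {1..n} \<and> i < j \<and> E i j}"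

text \<open>The coordinates s_ij of P^{|G|-1} are represented by a symmetric
  function s (only its values on edges matter), not all zero on edges; x is a point of
  P^{n-1} off the hyperplanes x_i = x_j (so all x_i are pairwise distinct, and x is not
  zero).  All defining equations are homogeneous, so this is independent of the choice of
  representatives.\<close>
definition scattering_corr ::
  "nat \<Rightarrow> (nat \<Rightarrow> nat \<Rightarrow> bool) \<Rightarrow> (nat \<Rightarrow> nat \<Rightarrow> complex) \<Rightarrow> (nat \<Rightarrow> complex) \<Rightarrow> bool" where
  "scattering_corr n E s x \<longleftrightarrow>
     (\<forall>i j. s i j = s j i) \<and>
     (\<exists>(i,j)\<in>edges n E. s i j \<noteq> 0) \<and>
     (\<exists>i\<in>{1..n}. x i \<noteq> 0) \<and>
     (\<forall>i\<in>{1..n}. \<forall>j\<in>{1..n}. i < j \<longrightarrow> x i \<noteq> x j) \<and>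
     (\<forall>i\<in>{1..n}. (\<Sum>j\<in>nbrs n E i. s i j) = 0) \<and>
     (\<forall>i\<in>{1..n}. (\<Sum>j\<in>nbrs n E i. s i j / (x i - x j)) = 0)"

definition theta :: "nat \<Rightarrow> (nat \<Rightarrow> nat \<Rightarrow> bool) \<Rightarrow> nat \<Rightarrow>
    (nat \<Rightarrow> nat \<Rightarrow> complex) \<Rightarrow> (nat \<Rightarrow> complex) \<Rightarrow> complex" where
  "theta n E k s x = (\<Sum>(i,j)\<in>edges n E. s i j * (\<Sum>l=0..k. x i ^ (k - l) * x j ^ l))"

end

theory Submission
  imports Defs
begin

lemma geom_id:
  fixes a b :: complex
  shows "(a - b) * (\<Sum>l=0..k. a ^ (k - l) * b ^ l) = a ^ Suc k - b ^ Suc k"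
proof (induction k)
  case 0
  then show ?case by simp
next
  case (Suc k)
  have "(\<Sum>l=0..Suc k. a ^ (Suc k - l) * b ^ l) = (\<Sum>l=0..k. a ^ (Suc k - l) * b ^ l) + b ^ Suc k"
    by simp
  also have "(\<Sum>l=0..k. a ^ (Suc k - l) * b ^ l) = a * (\<Sum>l=0..k. a ^ (k - l) * b ^ l)"
    unfolding sum_distrib_left
    by (rule sum.cong) (auto simp: Suc_diff_le)
  finally have "(a - b) * (\<Sum>l=0..Suc k. a ^ (Suc k - l) * b ^ l)
      = a * ((a - b) * (\<Sum>l=0..k. a ^ (k - l) * b ^ l)) + (a - b) * b ^ Suc k"
    by (simp add: algebra_simps)
  also have "\<dots> = a ^ Suc (Suc k) - b ^ Suc (Suc k)"
    by (simp only: Suc.IH) (simp add: algebra_simps)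
  finally show ?case .
qed

theorem mainTheorem5:
  fixes n k :: nat and E :: "nat \<Rightarrow> nat \<Rightarrow> bool"
    and s :: "nat \<Rightarrow> nat \<Rightarrow> complex" and x :: "nat \<Rightarrow> complex"
  assumes "simple_graph n E"
    and "2 \<le> k" and "k + 2 \<le> n"
    and "scattering_corr n E s x"
  shows "theta n E k s x = 0"
proof -
  have sym: "\<And>i j. s i j = s j i" and
    dist: "\<And>i j. i\<in>{1..n} \<Longrightarrow> j\<in>{1..n} \<Longrightarrow> i < j \<Longrightarrow> x i \<noteq> x j" and
    eq: "\<And>i. i\<in>{1..n} \<Longrightarrow> (\<Sum>j\<in>nbrs n E i. s i j / (x i - x j)) = 0"
    using assms(4) unfolding scattering_corr_def by auto
  have irr: "\<And>i. \<not> E i i" and esym: "\<And>i j. E i j \<Longrightarrow> E j i"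
    using assms(1) unfolding simple_graph_def by auto
  define g where "g = (\<lambda>(i,j). s i j * x i ^ Suc k / (x i - x j))"
  define D where "D = Sigma {1..n} (nbrs n E)"
  have "0 = (\<Sum>i\<in>{1..n}. x i ^ Suc k * (\<Sum>j\<in>nbrs n E i. s i j / (x i - x j)))"
    using eq by simp
  also have "\<dots> = (\<Sum>p\<in>D. g p)"
    unfolding D_def g_def sum_distrib_left
    by (subst sum.Sigma) (auto simp: nbrs_def mult_ac)
  finally have z: "(\<Sum>p\<in>D. g p) = 0" by simp
  have Dsplit: "D = edges n E \<union> prod.swap ` edges n E"
  proof (rule set_eqI)
    fix p show "p \<in> D \<longleftrightarrow> p \<in> edges n E \<union> prod.swap ` edges n E"
    proof (cases p)
      case (Pair i j)
      show ?thesis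
      proof
        assume "p \<in> D"
        then have h: "i\<in>{1..n}" "j\<in>{1..n}" "E i j" using Pair by (auto simp: D_def nbrs_def)
        then have "i \<noteq> j" using irr by auto
        then consider "i < j" | "j < i" by linarith
        then show "p \<in> edges n E \<union> prod.swap ` edges n E"
        proof cases
          case 1 then show ?thesis using h Pair by (auto simp: edges_def)
        next
          case 2
          then have "(j,i) \<in> edges n E" using h esym by (auto simp: edges_def)
          then show ?thesis using Pair by force
        qed
      next
        assume "p \<in> edges n E \<union> prod.swap ` edges n E"
        then show "p \<in> D" using Pair esym by (auto simp: D_def nbrs_def edges_def)
      qed
    qed
  qed
  have fin: "finite (edges n E)"
    by (rule finite_subset[of _ "{1..n} \<times> {1..n}"]) (auto simp: edges_def)
  have disj: "edges n E \<inter> prod.swap ` edges n E = {}"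
    by (auto simp: edges_def)
  have "(\<Sum>p\<in>D. g p) = (\<Sum>p\<in>edges n E. g p) + (\<Sum>p\<in>prod.swap ` edges n E. g p)"
    unfolding Dsplit using fin disj by (simp add: sum.union_disjoint)
  also have "(\<Sum>p\<in>prod.swap ` edges n E. g p) = (\<Sum>p\<in>edges n E. g (prod.swap p))"
    by (simp add: sum.reindex)
  also have "(\<Sum>p\<in>edges n E. g p) + (\<Sum>p\<in>edges n E. g (prod.swap p))
      = (\<Sum>p\<in>edges n E. g p + g (prod.swap p))"
    by (simp add: sum.distrib)
  also have "\<dots> = theta n E k s x"
    unfolding theta_def
  proof (rule sum.cong)
    fix p assume "p \<in> edges n E"
    then obtain i j where p: "p = (i,j)" "i\<in>{1..n}" "j\<in>{1..n}" "i < j"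
      by (auto simp: edges_def)
    then have ne: "x i - x j \<noteq> 0" using dist by auto
    have "g p + g (prod.swap p) = s i j * (x i ^ Suc k - x j ^ Suc k) / (x i - x j)"
    proof -
      have ne2: "x j - x i \<noteq> 0" using ne by auto
      have "g (prod.swap p) = - (s i j * x j ^ Suc k / (x i - x j))"
        using p(1) sym[of j i] unfolding g_def
        by (simp add: minus_diff_eq[symmetric, of "x i" "x j"] del: minus_diff_eq)
      moreover have "g p = s i j * x i ^ Suc k / (x i - x j)" using p(1) g_def by simp
      ultimately show ?thesis by (simp add: diff_divide_distrib right_diff_distrib)
    qed
    also have "\<dots> = s i j * (\<Sum>l=0..k. x i ^ (k - l) * x j ^ l)"
      using ne by (simp only: geom_id[of "x i" "x j" k, symmetric]) simp
    finally show "g p + g (prod.swap p) = (case p of (i, j) \<Rightarrow> s i j * (\<Sum>l = 0..k. x i ^ (k - l) * x j ^ l))"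
      using p(1) by simp
  qed simp
  finally show ?thesis using z by simp
qed

end
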